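(* Suppose the joint distribution $F$ of $\mathbf C$ is smooth and fully supported on $[0,\bar C]^N$. Then for each prosumer $i$ and each fixed $\mathbf x_{-i}\in[0,\bar C]^{N-1}$, the expected penalty $x_i\mapsto \mathbb E[\phi(x_i,\mathbf x_{-i};\mathbf C)]$ is continuously differentiable and convex on $[0,\bar C]$, and it is continuous in $\mathbf x_{-i}$. Consequently $\pi_i(x_i,\mathbf x_{-i},\rho)$ is concave in $x_i$ and jointly continuous in $(x_i,\mathbf x_{-i})$.
   Context: There are $N\ge1$ prosumers with capacities $\mathbf C=(C_1,\dots,C_N)\in[0,\bar C]^N$ with joint cdf $F$; offers $x_j\in[0,\bar C]$, $X=\sum_j x_j$, $\lambda_{RT}>0$, $z^+=\max\{z,0\}$. The penalty of prosumer $i$ is $\phi(x_i,\mathbf x_{-i};\mathbf C)=\lambda_{RT}(X-\sum_j C_j)^+\,(x_i-C_i)^+/\sum_{j=1}^N(x_j-C_j)^+$ (set to $0$ when the denominator vanishes). Prosumer $i$'s payoff is $\pi_i(x_i,\mathbf x_{-i},\rho)=\rho x_i+\mathbb E[u(d^0+C_i-x_i)-\phi(x_i,\mathbf x_{-i};\mathbf C)]$ with $\rho\ge0$, $d^0>\bar C$, and $u$ continuously differentiable, nonnegative, concave, increasing. *)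

theory Defs
  imports "HOL-Analysis.Analysis"
begin

text \<open>Prosumers are indexed by a finite type 'n, so N = CARD('n) >= 1.
  Capacity and offer vectors are elements of real^'n.\<close>

definition pos :: "real \<Rightarrow> real" where
  "pos z = max z 0"

definition cube :: "real \<Rightarrow> (real^'n) set" where
  "cube Cbar = {c. \<forall>j. 0 \<le> c$j \<and> c$j \<le> Cbar}"

text \<open>x with the i-th coordinate replaced by t, i.e. (t, x_{-i}).\<close>
definition upd :: "real^'n \<Rightarrow> 'n \<Rightarrow> real \<Rightarrow> real^'n" where
  "upd x i t = (\<chi> j. if j = i then t else x$j)"

definition penalty :: "real \<Rightarrow> real^'n \<Rightarrow> real^'n \<Rightarrow> 'n \<Rightarrow> real" where
  "penalty lam x c i =
     (let D = (\<Sum>j\<in>UNIV. pos (x$j - c$j)) in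
      if D = 0 then 0
      else lam * pos ((\<Sum>j\<in>UNIV. x$j) - (\<Sum>j\<in>UNIV. c$j)) * pos (x$i - c$i) / D)"

text \<open>The joint distribution F of C is smooth (has a density f w.r.t. Lebesgue
  measure which is continuous on the cube) and fully supported on [0,Cbar]^N
  (f vanishes outside the cube and the support of f is the whole cube).\<close>
definition smooth_full_support :: "((real^'n) \<Rightarrow> real) \<Rightarrow> real \<Rightarrow> bool" where
  "smooth_full_support f Cbar \<longleftrightarrow>
     f \<in> borel_measurable lborel \<and>
     (\<forall>c. 0 \<le> f c) \<and>
     (\<forall>c. c \<notin> cube Cbar \<longrightarrow> f c = 0) \<and>
     integrable lborel f \<and> integral\<^sup>L lborel f = 1 \<and>
     continuous_on (cube Cbar) f \<and>
     closure {c. f c > 0} = cube Cbar"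

definition expect :: "((real^'n) \<Rightarrow> real) \<Rightarrow> ((real^'n) \<Rightarrow> real) \<Rightarrow> real" where
  "expect f g = integral\<^sup>L lborel (\<lambda>c. g c * f c)"

definition exp_penalty :: "((real^'n) \<Rightarrow> real) \<Rightarrow> real \<Rightarrow> real^'n \<Rightarrow> 'n \<Rightarrow> real" where
  "exp_penalty f lam x i = expect f (\<lambda>c. penalty lam x c i)"

definition payoff :: "((real^'n) \<Rightarrow> real) \<Rightarrow> real \<Rightarrow> (real \<Rightarrow> real) \<Rightarrow> real \<Rightarrow> real
                      \<Rightarrow> real^'n \<Rightarrow> 'n \<Rightarrow> real" where
  "payoff f lam u d0 rho x i =
     rho * x$i + expect f (\<lambda>c. u (d0 + c$i - x$i) - penalty lam x c i)"

end

theory Submission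
  imports Defs
begin


definition HH :: "real \<Rightarrow> real \<Rightarrow> real \<Rightarrow> real" where
  "HH a S b = (if b \<le> 0 \<or> S + b \<le> 0 then 0 else (S + b) * b / (a + b))"
definition Hd :: "real \<Rightarrow> real \<Rightarrow> real \<Rightarrow> real" where
  "Hd a S b = (if b \<le> 0 \<or> S + b \<le> 0 then 0 else 1 - a * (a - S) / (a + b)^2)"

lemma key_sq: fixes a S b b' :: real assumes "0 \<le> a" "S \<le> a" "b > 0" "S + b > 0" "b \<le> b'"
  shows "a * (a - S) \<le> (a + b) * (a + b')"
proof -
  have "a \<le> a + b" using assms by linarith
  moreover have "a - S \<le> a + b" using assms by linarith
  ultimately have "a * (a - S) \<le> (a+b) * (a+b)" using assms by (intro mult_mono) auto
  also have "\<dots> \<le> (a+b)*(a+b')" using assms by (intro mult_left_mono) auto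
  finally show ?thesis .
qed

lemma K_diff: fixes a S b1 b2 :: real assumes "a + b1 > 0" "a + b2 > 0"
  shows "(S + b2) * b2 / (a + b2) - (S + b1) * b1 / (a + b1)
     = (b2 - b1) * (1 - a * (a - S) / ((a + b1) * (a + b2)))"
proof -
  have h1: "a + b1 \<noteq> 0" and h2: "a + b2 \<noteq> 0" using assms by auto
  define R where "R = a * (a - S) / ((a + b1) * (a + b2))"
  have 1: "(S + b2) * b2 / (a + b2) = b2 + S - a + a * (a - S) / (a + b2)"
    using h2 by (simp add: field_simps; (simp add: algebra_simps)?)
  have 2: "(S + b1) * b1 / (a + b1) = b1 + S - a + a * (a - S) / (a + b1)"
    using h1 by (simp add: field_simps; (simp add: algebra_simps)?)
  have 3: "a * (a - S) / (a + b2) - a * (a - S) / (a + b1) = - ((b2 - b1) * R)"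
    unfolding R_def using h1 h2 no_zero_divisors[OF h1 h2]  by (simp add: field_simps; (simp add: algebra_simps)?)
  have 4: "(b2 - b1) * (1 - R) = (b2 - b1) - (b2 - b1) * R" by (simp add: algebra_simps)
  show ?thesis unfolding R_def[symmetric] 4 1 2 using 3 by linarith
qed

lemma HH_mono_lip: assumes "0 \<le> a" "S \<le> a" "b1 \<le> b2"
  shows "0 \<le> HH a S b2 - HH a S b1 \<and> HH a S b2 - HH a S b1 \<le> b2 - b1"
proof (cases "b2 \<le> 0 \<or> S + b2 \<le> 0")
  case True
  then have "b1 \<le> 0 \<or> S + b1 \<le> 0" using assms by auto
  then show ?thesis using True assms by (simp add: HH_def)
next
  case F2: False
  then have p2: "b2 > 0" "S + b2 > 0" by auto
  have q2: "(S + b2) * b2 / (a + b2) \<le> b2" "(S + b2) * b2 / (a + b2) \<le> S + b2"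
    "0 \<le> (S + b2) * b2 / (a + b2)"
    using p2 assms by (auto simp: divide_simps mult_left_mono mult_right_mono)
  show ?thesis
  proof (cases "b1 \<le> 0 \<or> S + b1 \<le> 0")
    case True
    then show ?thesis using F2 q2 assms by (auto simp: HH_def)
  next
    case False
    then have p1: "b1 > 0" "S + b1 > 0" by auto
    have k: "a * (a - S) \<le> (a + b1) * (a + b2)" by (rule key_sq) (use assms p1 in auto)
    have pos: "(a + b1) * (a + b2) > 0" using p1 p2 assms by auto
    have r0: "0 \<le> a * (a - S) / ((a + b1) * (a + b2))" using assms pos by auto
    have r1: "a * (a - S) / ((a + b1) * (a + b2)) \<le> 1" using k pos by (simp add: divide_simps)
    have e: "HH a S b2 - HH a S b1 = (b2 - b1) * (1 - a * (a - S) / ((a + b1) * (a + b2)))"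
      using False F2 K_diff[of a b1 b2 S] assms p1 by (simp add: HH_def)
    have "0 \<le> b2 - b1" using assms by simp
    then show ?thesis unfolding e using r0 r1
      by (auto intro: mult_nonneg_nonneg mult_left_le)
  qed
qed

lemma HH_lip: assumes "0 \<le> a" "S \<le> a"
  shows "\<bar>HH a S b1 - HH a S b2\<bar> \<le> \<bar>b1 - b2\<bar>"
proof (cases "b1 \<le> b2")
  case True thus ?thesis using HH_mono_lip[OF assms True] by linarith
next
  case False thus ?thesis using HH_mono_lip[OF assms, of b2 b1] by linarith
qed

lemma Hd_bounds: assumes "0 \<le> a" "S \<le> a" shows "0 \<le> Hd a S b \<and> Hd a S b \<le> 1"
proof (cases "b \<le> 0 \<or> S + b \<le> 0")
  case True thus ?thesis by (simp add: Hd_def)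
next
  case False
  have k: "a * (a - S) \<le> (a + b) * (a + b)" by (rule key_sq) (use assms False in auto)
  have pos: "(a + b)^2 > 0" using False assms by auto
  have "0 \<le> a * (a - S) / (a + b)^2" using assms pos by auto
  moreover have "a * (a - S) / (a + b)^2 \<le> 1" using k pos by (simp add: divide_simps power2_eq_square)
  ultimately show ?thesis using False by (simp add: Hd_def)
qed

lemma Hd_mono: assumes "0 \<le> a" "S \<le> a" "b1 \<le> b2" shows "Hd a S b1 \<le> Hd a S b2"
proof (cases "b1 \<le> 0 \<or> S + b1 \<le> 0")
  case True thus ?thesis using Hd_bounds[OF assms(1,2), of b2] by (simp add: Hd_def)
next
  case False
  then have F2: "\<not> (b2 \<le> 0 \<or> S + b2 \<le> 0)" using assms by auto
  have "(a + b1)^2 \<le> (a + b2)^2" using False assms by (intro power_mono) auto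
  moreover have "(a + b1)^2 > 0" "(a + b2)^2 > 0" using False F2 assms by auto
  moreover have "0 \<le> a * (a - S)" using assms by auto
  ultimately have "a * (a - S) / (a + b2)^2 \<le> a * (a - S) / (a + b1)^2"
    by (intro divide_left_mono) (auto intro: mult_pos_pos)
  then show ?thesis using False F2 by (simp add: Hd_def)
qed

lemma HH_deriv: assumes "0 \<le> a" "S \<le> a" "b \<noteq> 0" "S + b \<noteq> 0"
  shows "(HH a S has_real_derivative Hd a S b) (at b)"
proof (cases "b < 0 \<or> S + b < 0")
  case True
  have ev: "eventually (\<lambda>y. y \<in> {y. y < 0 \<or> S + y < 0}) (nhds b)"
    by (rule eventually_nhds_in_open) (use True in \<open>auto intro!: open_Collect_less open_Collect_disj continuous_intros\<close>)
  have "eventually (\<lambda>y. HH a S y = 0) (nhds b)"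
    using ev by eventually_elim (auto simp: HH_def)
  moreover have "Hd a S b = 0" using True by (auto simp: Hd_def)
  ultimately show ?thesis
    by (subst DERIV_cong_ev[OF refl _ refl, where g = "\<lambda>_. 0"]) auto
next
  case False
  then have p: "b > 0" "S + b > 0" using assms by auto
  have ev: "eventually (\<lambda>y. y \<in> {y. 0 < y \<and> 0 < S + y}) (nhds b)"
    by (rule eventually_nhds_in_open) (use p in \<open>auto intro!: open_Collect_less open_Collect_conj continuous_intros\<close>)
  have "eventually (\<lambda>y. HH a S y = (S + y) * y / (a + y)) (nhds b)"
    using ev by eventually_elim (auto simp: HH_def)
  moreover have "((\<lambda>y. (S + y) * y / (a + y)) has_real_derivative Hd a S b) (at b)"
  proof -
    have ab: "a + b \<noteq> 0" using p assms by auto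
    have "((\<lambda>y. (S + y) * y / (a + y)) has_real_derivative
         ((1 * b + (S + b) * 1) * (a + b) - (S + b) * b * 1) / ((a + b) * (a + b))) (at b)"
      by (rule derivative_eq_intros refl | use ab in simp)+
    moreover have "((1 * b + (S + b) * 1) * (a + b) - (S + b) * b * 1) / ((a + b) * (a + b)) = Hd a S b"
    proof -
      have d: "(a+b)*(a+b) \<noteq> 0" using ab by simp
      have "Hd a S b = ((a+b)*(a+b) - a*(a-S))/((a+b)*(a+b))"
        using p d by (simp add: Hd_def power2_eq_square diff_divide_distrib)
      moreover have "((1 * b + (S + b) * 1) * (a + b) - (S + b) * b * 1) = (a+b)*(a+b) - a*(a-S)"
        by (simp add: algebra_simps)
      ultimately show ?thesis by simp
    qed
    ultimately show ?thesis by simp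
  qed
  ultimately show ?thesis
    by (subst DERIV_cong_ev[OF refl _ refl]) auto
qed

lemma Hd_cont: assumes "0 \<le> a" "S \<le> a" "b \<noteq> 0" "S + b \<noteq> 0"
  shows "isCont (Hd a S) b"
proof (cases "b < 0 \<or> S + b < 0")
  case True
  have ev: "eventually (\<lambda>y. y \<in> {y. y < 0 \<or> S + y < 0}) (nhds b)"
    by (rule eventually_nhds_in_open) (use True in \<open>auto intro!: open_Collect_less open_Collect_disj continuous_intros\<close>)
  have "eventually (\<lambda>y. Hd a S y = 0) (nhds b)"
    using ev by eventually_elim (auto simp: Hd_def)
  then show ?thesis by (subst isCont_cong) auto
next
  case False
  then have p: "b > 0" "S + b > 0" using assms by auto
  have ev: "eventually (\<lambda>y. y \<in> {y. 0 < y \<and> 0 < S + y}) (nhds b)"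
    by (rule eventually_nhds_in_open) (use p in \<open>auto intro!: open_Collect_less open_Collect_conj continuous_intros\<close>)
  have "eventually (\<lambda>y. Hd a S y = 1 - a * (a - S) / (a + y)^2) (nhds b)"
    using ev by eventually_elim (auto simp: Hd_def)
  moreover have "isCont (\<lambda>y. 1 - a * (a - S) / (a + y)^2) b"
    using p assms by (intro continuous_intros) auto
  ultimately show ?thesis by (subst isCont_cong) auto
qed




definition Q :: "real \<Rightarrow> 'n \<Rightarrow> real^'n \<Rightarrow> real" where
  "Q lam i z = (if (\<Sum>j\<in>UNIV. pos (z$j)) = 0 then 0
     else lam * pos (\<Sum>j\<in>UNIV. z$j) * pos (z$i) / (\<Sum>j\<in>UNIV. pos (z$j)))"

lemma pos_ge0: "0 \<le> pos z" and pos_ge: "z \<le> pos z" by (auto simp: pos_def)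

lemma penalty_Q: "penalty lam x c i = Q lam i (x - c)"
  by (simp add: penalty_def Q_def Let_def sum_subtractf)

lemma Q_bound: assumes "lam \<ge> 0"
  shows "0 \<le> Q lam i z \<and> Q lam i z \<le> lam * (\<Sum>j\<in>UNIV. pos (z$j))"
proof (cases "(\<Sum>j\<in>UNIV. pos (z$j)) = 0")
  case True then show ?thesis by (simp add: Q_def)
next
  case False
  define D where "D = (\<Sum>j\<in>UNIV. pos (z$j))"
  have D0: "D > 0" using False unfolding D_def by (metis (no_types) less_eq_real_def pos_ge0 sum_nonneg)
  have a: "pos (z$i) \<le> D" unfolding D_def
    by (rule member_le_sum) (auto simp: pos_ge0)
  have b: "pos (\<Sum>j\<in>UNIV. z$j) \<le> D" unfolding D_def pos_def
    using sum_mono[of UNIV "\<lambda>j. z$j" "\<lambda>j. pos (z$j)"] pos_ge sum_nonneg[of UNIV "\<lambda>j. pos (z$j)"] pos_ge0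
    by (auto simp: pos_def)
  have "pos (\<Sum>j\<in>UNIV. z$j) * pos (z$i) / D \<le> D * D / D"
    using a b D0 by (intro divide_right_mono mult_mono) (auto simp: pos_ge0)
  also have "\<dots> = D" using D0 by simp
  finally have "lam * (pos (\<Sum>j\<in>UNIV. z$j) * pos (z$i) / D) \<le> lam * D"
    using assms by (rule mult_left_mono)
  moreover have "0 \<le> lam * (pos (\<Sum>j\<in>UNIV. z$j) * pos (z$i) / D)"
    using assms D0 by (auto simp: pos_ge0)
  ultimately show ?thesis using False unfolding Q_def D_def[symmetric] by auto
qed

lemma Q_cont: fixes i :: "'n::finite" assumes "lam \<ge> 0" shows "continuous_on UNIV (Q lam i)"
proof -
  define D where "D = (\<lambda>z::real^'n. \<Sum>j\<in>UNIV. pos (z$j))"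
  have Dc: "continuous_on UNIV D" unfolding D_def pos_def by (intro continuous_intros)
  have D0: "\<And>z. D z \<ge> 0" unfolding D_def by (auto intro: sum_nonneg simp: pos_ge0)
  have "isCont (Q lam i) z" for z
  proof (cases "D z = 0")
    case True
    have "(Q lam i \<longlongrightarrow> 0) (at z)"
    proof (rule Lim_null_comparison)
      show "\<forall>\<^sub>F x in at z. norm (Q lam i x) \<le> lam * D x"
      proof (rule always_eventually, intro allI)
        fix x :: "real^'n" show "norm (Q lam i x) \<le> lam * D x"
          using Q_bound[OF assms, of i x] by (auto simp: D_def)
      qed
      have "((\<lambda>x. lam * D x) \<longlongrightarrow> lam * D z) (at z)"
        using Dc by (intro tendsto_intros) (simp add: continuous_on_def)
      then show "((\<lambda>x. lam * D x) \<longlongrightarrow> 0) (at z)" using True by simp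
    qed
    moreover have "Q lam i z = 0" using True by (simp add: Q_def D_def)
    ultimately show ?thesis by (simp add: isCont_def)
  next
    case False
    then have Dp: "D z > 0" using D0[of z] by auto
    have ev: "eventually (\<lambda>y. y \<in> {y. 0 < D y}) (nhds z)"
      by (rule eventually_nhds_in_open) (use Dp Dc in \<open>auto intro!: open_Collect_less continuous_intros\<close>)
    have "eventually (\<lambda>y. Q lam i y = lam * pos (\<Sum>j\<in>UNIV. y$j) * pos (y$i) / D y) (nhds z)"
      using ev by eventually_elim (auto simp: Q_def D_def)
    moreover have "isCont (\<lambda>y. lam * pos (\<Sum>j\<in>UNIV. y$j) * pos (y$i) / D y) z"
      using Dp Dc unfolding pos_def
      by (intro continuous_intros) (auto simp: continuous_on_eq_continuous_at)
    ultimately show ?thesis by (subst isCont_cong) auto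
  qed
  then show ?thesis by (simp add: continuous_at_imp_continuous_on)
qed

lemma upd_eq: "upd y i t = y + (t - y$i) *\<^sub>R axis i 1"
  by (simp add: upd_def vec_eq_iff axis_def)

lemma upd_nth: "upd y i t $ j = (if j = i then t else y $ j)"
  by (simp add: upd_def)

lemma Q_HH:
  fixes x c :: "real^'n"
  shows "Q lam i (upd x i s - c) =
    lam * HH (\<Sum>j\<in>UNIV-{i}. pos (x$j - c$j)) (\<Sum>j\<in>UNIV-{i}. (x$j - c$j)) (s - c$i)"
proof -
  define a where "a = (\<Sum>j\<in>UNIV-{i}. pos (x$j - c$j))"
  define S where "S = (\<Sum>j\<in>UNIV-{i}. (x$j - c$j))"
  define b where "b = s - c$i"
  have a0: "0 \<le> a" unfolding a_def by (auto intro: sum_nonneg simp: pos_ge0)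
  have e1: "(\<Sum>j\<in>UNIV. pos ((upd x i s - c)$j)) = pos b + a"
    unfolding a_def b_def
    by (subst sum.remove[of UNIV i]) (auto simp: upd_nth intro!: sum.cong)
  have e2: "(\<Sum>j\<in>UNIV. (upd x i s - c)$j) = b + S"
    unfolding S_def b_def
    by (subst sum.remove[of UNIV i]) (auto simp: upd_nth intro!: sum.cong)
  have e3: "(upd x i s - c)$i = b" by (simp add: upd_nth b_def)
  have "Q lam i (upd x i s - c) = lam * HH a S b"
  proof (cases "b \<le> 0")
    case True
    then have "pos b = 0" by (simp add: pos_def)
    then show ?thesis unfolding Q_def e1 e2 e3 using True by (simp add: HH_def)
  next
    case False
    then have pb: "pos b = b" "pos b + a > 0" using a0 by (auto simp: pos_def)
    show ?thesis
    proof (cases "S + b \<le> 0")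
      case True
      then have "pos (b + S) = 0" by (simp add: pos_def)
      then show ?thesis unfolding Q_def e1 e2 e3 using True pb by (simp add: HH_def)
    next
      case F2: False
      then have "pos (b + S) = S + b" by (simp add: pos_def)
      then show ?thesis unfolding Q_def e1 e2 e3 using F2 False pb by (simp add: HH_def add.commute)
    qed
  qed
  then show ?thesis unfolding a_def S_def b_def .
qed




lemma F_facts: assumes "smooth_full_support f Cbar"
  shows "f \<in> borel_measurable lborel" "\<And>c. 0 \<le> f c" "\<And>c. c \<notin> cube Cbar \<Longrightarrow> f c = 0"
    "integrable lborel f"
  using assms by (auto simp: smooth_full_support_def)

lemma cube_cbox: "cube Cbar = cbox (0::real^'n) (\<chi> j. Cbar)"
  by (auto simp: cube_def mem_box_cart)

lemma cont_meas: "continuous_on UNIV g \<Longrightarrow> (g :: 'a::euclidean_space \<Rightarrow> real) \<in> borel_measurable lborel"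
  using borel_measurable_continuous_onI by (simp add: measurable_lborel1)

lemma cont_bounded: assumes "continuous_on UNIV (g :: real^'n \<Rightarrow> real)"
  shows "\<exists>B. \<forall>c\<in>cube Cbar. \<bar>g c\<bar> \<le> B"
proof -
  have "compact (g ` cube Cbar)" unfolding cube_cbox
    by (rule compact_continuous_image) (use assms in \<open>auto intro: continuous_on_subset\<close>)
  then obtain B where "\<forall>y\<in>g ` cube Cbar. norm y \<le> B" using compact_imp_bounded bounded_iff by metis
  then show ?thesis by auto
qed

lemma int_bounded:
  assumes F: "smooth_full_support f Cbar" and g: "g \<in> borel_measurable lborel"
    and B: "\<And>c. c \<in> cube Cbar \<Longrightarrow> \<bar>g c\<bar> \<le> B"
  shows "integrable lborel (\<lambda>c. g c * f c)"
proof (rule Bochner_Integration.integrable_bound)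
  note ff = F_facts[OF F]
  show "integrable lborel (\<lambda>c. B * f c)" using ff(4) by simp
  show "(\<lambda>c. g c * f c) \<in> borel_measurable lborel" using g ff(1) by measurable
  show "AE c in lborel. norm (g c * f c) \<le> norm (B * f c)"
  proof (rule AE_I2)
    fix c :: "real^'a"
    show "norm (g c * f c) \<le> norm (B * f c)"
    proof (cases "c \<in> cube Cbar")
      case True
      have "\<bar>g c\<bar> * f c \<le> \<bar>B\<bar> * f c" using B[OF True] ff(2)[of c] by (intro mult_right_mono) auto
      then show ?thesis using ff(2)[of c] by (simp add: abs_mult)
    next
      case False then show ?thesis using ff(3) by simp
    qed
  qed
qed

lemma int_cont:
  assumes F: "smooth_full_support f Cbar" and g: "continuous_on UNIV g"
  shows "integrable lborel (\<lambda>c. g c * f c)"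
  using cont_bounded[OF g, of Cbar] int_bounded[OF F cont_meas[OF g]] by blast

lemma expect_cont:
  fixes k :: "'a::metric_space \<Rightarrow> real^'n \<Rightarrow> real"
  assumes F: "smooth_full_support f Cbar"
    and meas: "\<And>y. y \<in> S \<Longrightarrow> k y \<in> borel_measurable lborel"
    and cont: "\<And>y. y \<in> S \<Longrightarrow> AE c in lborel. c \<in> cube Cbar \<longrightarrow> continuous (at y within S) (\<lambda>y. k y c)"
    and bnd: "\<And>y c. y \<in> S \<Longrightarrow> c \<in> cube Cbar \<Longrightarrow> \<bar>k y c\<bar> \<le> B"
  shows "continuous_on S (\<lambda>y. expect f (k y))"
  unfolding continuous_on_sequentially
proof (intro allI ballI impI)
  note ff = F_facts[OF F]
  fix X y assume y: "y \<in> S" and X: "(\<forall>n. X n \<in> S) \<and> X \<longlonglongrightarrow> y"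
  show "((\<lambda>y. expect f (k y)) \<circ> X) \<longlonglongrightarrow> expect f (k y)"
    unfolding comp_def expect_def
  proof (rule integral_dominated_convergence[where w = "\<lambda>c. B * f c"])
    show "(\<lambda>c. k y c * f c) \<in> borel_measurable lborel" using meas[OF y] ff(1) by measurable
    show "(\<lambda>c. k (X n) c * f c) \<in> borel_measurable lborel" for n
    proof -
      have "k (X n) \<in> borel_measurable lborel" using meas X by auto
      then show ?thesis using ff(1) by measurable
    qed
    show "integrable lborel (\<lambda>c. B * f c)" using ff(4) by simp
    show "AE c in lborel. (\<lambda>n. k (X n) c * f c) \<longlonglongrightarrow> k y c * f c"
      using cont[OF y]
    proof eventually_elim
      case (elim c)
      show ?case
      proof (cases "c \<in> cube Cbar")
        case True
        have "(\<lambda>n. k (X n) c) \<longlonglongrightarrow> k y c"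
          by (rule continuous_within_tendsto_compose[where S = S]) (use elim True X in auto)
        then show ?thesis by (intro tendsto_intros)
      next
        case False then show ?thesis using ff(3) by simp
      qed
    qed
    show "AE c in lborel. norm (k (X n) c * f c) \<le> B * f c" for n
    proof (rule AE_I2)
      fix c :: "real^'n"
      show "norm (k (X n) c * f c) \<le> B * f c"
      proof (cases "c \<in> cube Cbar")
        case True
        have "\<bar>k (X n) c\<bar> * f c \<le> B * f c" using bnd[OF _ True, of "X n"] X ff(2)[of c] by (intro mult_right_mono) auto
        then show ?thesis using ff(2)[of c] by (simp add: abs_mult)
      next
        case False then show ?thesis using ff(3) by simp
      qed
    qed
  qed
qed

lemma hyper_AE:
  fixes i :: "'n::finite"
  shows "AE c in (lborel :: (real^'n) measure). c $ i \<noteq> t \<and> (\<Sum>j\<in>UNIV. c $ j) \<noteq> T"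
proof -
  have n1: "\<exists>N\<in>null_sets lborel. {c::real^'n. axis i 1 \<bullet> c = t} \<subseteq> N"
    using negligible_hyperplane[of "axis i (1::real)" t] axis_eq_0_iff[of i "1::real"]
    by (simp add: negligible_iff_null_sets null_sets_completion_iff2)
  have n2: "\<exists>N\<in>null_sets lborel. {c::real^'n. (\<chi> j. 1) \<bullet> c = T} \<subseteq> N"
  proof -
    have "((\<chi> j. (1::real)) :: real^'n) \<noteq> 0" by (simp add: vec_eq_iff)
    then show ?thesis using negligible_hyperplane[of "((\<chi> j. (1::real)) :: real^'n)" T]
      by (simp add: negligible_iff_null_sets null_sets_completion_iff2)
  qed
  obtain N1 N2 where N: "N1 \<in> null_sets lborel" "N2 \<in> null_sets lborel"
    "{c::real^'n. axis i 1 \<bullet> c = t} \<subseteq> N1" "{c::real^'n. (\<chi> j. 1) \<bullet> c = T} \<subseteq> N2"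
    using n1 n2 by blast
  show ?thesis
  proof (rule AE_I'[of "N1 \<union> N2"])
    show "N1 \<union> N2 \<in> null_sets lborel" using N by auto
    have e1: "axis i 1 \<bullet> c = c $ i" for c :: "real^'n" by (simp add: inner_commute inner_axis)
    have e2: "(\<chi> j. 1) \<bullet> c = (\<Sum>j\<in>UNIV. c $ j)" for c :: "real^'n" by (simp add: inner_vec_def)
    show "{c \<in> space lborel. \<not> (c $ i \<noteq> t \<and> (\<Sum>j\<in>UNIV. c $ j) \<noteq> T)} \<subseteq> N1 \<union> N2"
      using N(3,4) e1 e2 by auto
  qed
qed




lemma upd_cube: "y \<in> cube Cbar \<Longrightarrow> t \<in> {0..Cbar} \<Longrightarrow> upd y i t \<in> cube Cbar"
  by (auto simp: cube_def upd_nth)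

lemma Q_cube_bound:
  fixes i :: "'n::finite"
  assumes "lam \<ge> 0" "y \<in> cube Cbar" "c \<in> cube Cbar"
  shows "\<bar>Q lam i (y - c)\<bar> \<le> lam * real CARD('n) * Cbar"
proof -
  have C0: "0 \<le> Cbar" using assms(2) unfolding cube_def by (auto intro: order_trans)
  have "(\<Sum>j\<in>UNIV. pos ((y - c)$j)) \<le> (\<Sum>j\<in>(UNIV::'n set). Cbar)"
  proof (rule sum_mono)
    fix j :: 'n
    have "y $ j \<le> Cbar" "0 \<le> c $ j" using assms(2,3) unfolding cube_def by auto
    then have "y $ j - c $ j \<le> Cbar" by linarith
    then show "pos ((y - c)$j) \<le> Cbar" using C0 by (simp add: pos_def)
  qed
  then have "lam * (\<Sum>j\<in>UNIV. pos ((y - c)$j)) \<le> lam * (real CARD('n) * Cbar)"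
    using assms(1) by (intro mult_left_mono) auto
  then show ?thesis using Q_bound[OF assms(1), of i "y - c"] by (simp add: mult.assoc)
qed

theorem mainTheorem2:
  fixes f :: "(real^'n) \<Rightarrow> real" and Cbar lam rho d0 :: real and u :: "real \<Rightarrow> real"
  assumes F: "smooth_full_support f Cbar"
    and lam: "lam > 0" and rho: "rho \<ge> 0" and d0: "d0 > Cbar"
    and u_C1: "\<exists>u'. continuous_on {0<..} u' \<and>
                    (\<forall>t\<in>{0<..}. (u has_real_derivative u' t) (at t))"
    and u_nonneg: "\<forall>t\<in>{0<..}. u t \<ge> 0"
    and u_concave: "concave_on {0<..} u"
    and u_incr: "mono_on {0<..} u"
  shows "\<forall>i. \<forall>x\<in>cube Cbar.
           (\<exists>g'. continuous_on {0..Cbar} g' \<and>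
              (\<forall>t\<in>{0..Cbar}. ((\<lambda>s. exp_penalty f lam (upd x i s) i)
                                    has_real_derivative g' t) (at t within {0..Cbar})))
         \<and> convex_on {0..Cbar} (\<lambda>s. exp_penalty f lam (upd x i s) i)
         \<and> (\<forall>t\<in>{0..Cbar}. continuous_on (cube Cbar) (\<lambda>y. exp_penalty f lam (upd y i t) i))
         \<and> concave_on {0..Cbar} (\<lambda>s. payoff f lam u d0 rho (upd x i s) i)
         \<and> continuous_on (cube Cbar) (\<lambda>y. payoff f lam u d0 rho y i)"
proof (intro allI ballI)
  fix i :: 'n and x :: "real^'n" assume x: "x \<in> cube Cbar"
  note ff = F_facts[OF F]
  have lam0: "lam \<ge> 0" using lam by simp
  have Cb0: "0 \<le> Cbar" using x unfolding cube_def by (auto intro: order_trans)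
  define aa where "aa = (\<lambda>c::real^'n. \<Sum>j\<in>UNIV-{i}. pos (x$j - c$j))"
  define SS where "SS = (\<lambda>c::real^'n. \<Sum>j\<in>UNIV-{i}. (x$j - c$j))"
  have aa0: "0 \<le> aa c" for c unfolding aa_def by (auto intro: sum_nonneg simp: pos_ge0)
  have SSle: "SS c \<le> aa c" for c unfolding aa_def SS_def by (rule sum_mono) (simp add: pos_ge)
  have penH: "penalty lam (upd x i s) c i = lam * HH (aa c) (SS c) (s - c$i)" for s c
    using Q_HH[of lam i x s c] unfolding aa_def SS_def penalty_Q by simp
  have Qc: "continuous_on UNIV (Q lam i)" by (rule Q_cont[OF lam0])
  have pen_cont_c: "continuous_on UNIV (\<lambda>c. penalty lam y c i)" for y
    unfolding penalty_Q by (rule continuous_on_compose2[OF Qc]) (auto intro: continuous_intros)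
  have pen_cont_y: "continuous_on UNIV (\<lambda>y. penalty lam (h y) c i)" if "continuous_on UNIV h" for h c
    unfolding penalty_Q by (rule continuous_on_compose2[OF Qc]) (use that in \<open>auto intro: continuous_intros\<close>)
  have pen_int: "integrable lborel (\<lambda>c. penalty lam y c i * f c)" for y
    by (rule int_cont[OF F pen_cont_c])
  have pen_meas: "(\<lambda>c. penalty lam y c i) \<in> borel_measurable lborel" for y
    by (rule cont_meas[OF pen_cont_c])
  define g where "g = (\<lambda>s. exp_penalty f lam (upd x i s) i)"
  define G where "G = (\<lambda>t. expect f (\<lambda>c. lam * Hd (aa c) (SS c) (t - c$i)))"
  have Gmeas: "(\<lambda>c. lam * Hd (aa c) (SS c) (t - c$i)) \<in> borel_measurable lborel" for t
    unfolding aa_def SS_def Hd_def pos_def by measurable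
  have Gbnd: "\<bar>lam * Hd (aa c) (SS c) (t - c$i)\<bar> \<le> lam" for t c
    using Hd_bounds[OF aa0 SSle, of c "t - c$i"] lam0 by (auto simp: abs_mult intro: mult_left_le)
  have Gint: "integrable lborel (\<lambda>c. lam * Hd (aa c) (SS c) (t - c$i) * f c)" for t
    by (rule int_bounded[OF F Gmeas Gbnd])
  have SSid: "SS c + (t - c$i) = (\<Sum>j\<in>UNIV. upd x i t $ j) - (\<Sum>j\<in>UNIV. c $ j)" for c t
  proof -
    have "(\<Sum>j\<in>UNIV. upd x i t $ j) = t + (\<Sum>j\<in>UNIV-{i}. x $ j)"
      by (subst sum.remove[of UNIV i]) (auto simp: upd_nth intro!: sum.cong)
    moreover have "(\<Sum>j\<in>UNIV. c $ j) = c$i + (\<Sum>j\<in>UNIV-{i}. c $ j)"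
      by (subst sum.remove[of UNIV i]) auto
    moreover have "SS c = (\<Sum>j\<in>UNIV-{i}. x $ j) - (\<Sum>j\<in>UNIV-{i}. c $ j)"
      unfolding SS_def by (simp add: sum_subtractf)
    ultimately show ?thesis by simp
  qed
  have kinks: "AE c in lborel. t - c$i \<noteq> 0 \<and> SS c + (t - c$i) \<noteq> 0" for t
    using hyper_AE[of i t "\<Sum>j\<in>UNIV. upd x i t $ j"]
    by eventually_elim (auto simp: SSid)
  have deriv: "(g has_real_derivative G t) (at t)" for t
  proof -
    have "((\<lambda>h. (g (t + h) - g t) / h) \<longlongrightarrow> G t) (at 0)"
      unfolding tendsto_at_iff_sequentially
    proof (intro allI impI)
      fix X :: "nat \<Rightarrow> real" assume X0: "\<forall>n. X n \<in> UNIV - {0}" and X: "X \<longlonglongrightarrow> 0"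
      have eq: "(g (t + X n) - g t) / X n = integral\<^sup>L lborel
          (\<lambda>c. (penalty lam (upd x i (t + X n)) c i - penalty lam (upd x i t) c i) / X n * f c)" for n
      proof -
        have "integral\<^sup>L lborel
          (\<lambda>c. (penalty lam (upd x i (t + X n)) c i - penalty lam (upd x i t) c i) / X n * f c)
          = integral\<^sup>L lborel (\<lambda>c. (penalty lam (upd x i (t + X n)) c i * f c - penalty lam (upd x i t) c i * f c) / X n)"
          by (rule Bochner_Integration.integral_cong) (auto simp: field_simps)
        also have "\<dots> = (g (t + X n) - g t) / X n"
          unfolding integral_divide_zero g_def exp_penalty_def expect_def
          by (subst Bochner_Integration.integral_diff[OF pen_int pen_int]) simp
        finally show ?thesis by (rule sym)
      qed
      show "((\<lambda>h. (g (t + h) - g t) / h) \<circ> X) \<longlonglongrightarrow> G t"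
        unfolding comp_def eq G_def expect_def
      proof (rule integral_dominated_convergence[where w = "\<lambda>c. lam * f c"])
        show "(\<lambda>c. lam * Hd (aa c) (SS c) (t - c $ i) * f c) \<in> borel_measurable lborel"
          using Gmeas ff(1) by measurable
        show "(\<lambda>c. (penalty lam (upd x i (t + X n)) c i - penalty lam (upd x i t) c i) / X n * f c)
            \<in> borel_measurable lborel" for n
          using pen_meas[of "upd x i (t + X n)"] pen_meas[of "upd x i t"] ff(1) by measurable
        show "integrable lborel (\<lambda>c. lam * f c)" using ff(4) by simp
        show "AE c in lborel. (\<lambda>n. (penalty lam (upd x i (t + X n)) c i - penalty lam (upd x i t) c i) / X n * f c)
            \<longlonglongrightarrow> lam * Hd (aa c) (SS c) (t - c $ i) * f c"
          using kinks[of t]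
        proof eventually_elim
          case (elim c)
          have D: "(HH (aa c) (SS c) has_real_derivative Hd (aa c) (SS c) (t - c$i)) (at (t - c$i))"
            by (rule HH_deriv[OF aa0 SSle]) (use elim in auto)
          then have "((\<lambda>h. (HH (aa c) (SS c) (t - c$i + h) - HH (aa c) (SS c) (t - c$i)) / h)
              \<longlongrightarrow> Hd (aa c) (SS c) (t - c$i)) (at 0)"
            by (simp add: DERIV_def)
          then have "(\<lambda>n. (HH (aa c) (SS c) (t - c$i + X n) - HH (aa c) (SS c) (t - c$i)) / X n)
              \<longlonglongrightarrow> Hd (aa c) (SS c) (t - c$i)"
            unfolding tendsto_at_iff_sequentially comp_def using X0 X by blast
          then have "(\<lambda>n. lam * ((HH (aa c) (SS c) (t - c$i + X n) - HH (aa c) (SS c) (t - c$i)) / X n) * f c)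
              \<longlonglongrightarrow> lam * Hd (aa c) (SS c) (t - c$i) * f c"
            by (intro tendsto_intros)
          moreover have "(\<lambda>n. (penalty lam (upd x i (t + X n)) c i - penalty lam (upd x i t) c i) / X n * f c)
             = (\<lambda>n. lam * ((HH (aa c) (SS c) (t - c$i + X n) - HH (aa c) (SS c) (t - c$i)) / X n) * f c)"
          proof (rule ext)
            fix n
            have e: "t + X n - c$i = t - c$i + X n" by simp
            show "(penalty lam (upd x i (t + X n)) c i - penalty lam (upd x i t) c i) / X n * f c
             = lam * ((HH (aa c) (SS c) (t - c$i + X n) - HH (aa c) (SS c) (t - c$i)) / X n) * f c"
              unfolding penH e by (simp add: right_diff_distrib[symmetric])
          qed
          ultimately show ?case by (simp only:)
        qed
        show "AE c in lborel. norm ((penalty lam (upd x i (t + X n)) c i - penalty lam (upd x i t) c i) / X n * f c)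
            \<le> lam * f c" for n
        proof (rule AE_I2)
          fix c :: "real^'n"
          have Xn: "X n \<noteq> 0" using X0 by auto
          have "\<bar>HH (aa c) (SS c) (t + X n - c$i) - HH (aa c) (SS c) (t - c$i)\<bar> \<le> \<bar>X n\<bar>"
            using HH_lip[OF aa0[of c] SSle[of c], of "t + X n - c$i" "t - c$i"] by simp
          then have "\<bar>(penalty lam (upd x i (t + X n)) c i - penalty lam (upd x i t) c i) / X n\<bar> \<le> lam"
            unfolding penH using Xn lam0
            by (simp add: abs_mult right_diff_distrib[symmetric] divide_simps mult_left_mono)
          note bq = this
          show "norm ((penalty lam (upd x i (t + X n)) c i - penalty lam (upd x i t) c i) / X n * f c) \<le> lam * f c"
            using mult_right_mono[OF bq ff(2)[of c]] ff(2)[of c] by (simp add: abs_mult)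
        qed
      qed
    qed
    then show ?thesis by (simp add: DERIV_def)
  qed
  have Gcont: "continuous_on UNIV G"
    unfolding G_def
  proof (rule expect_cont[OF F, where B = lam])
    show "(\<lambda>c. lam * Hd (aa c) (SS c) (t - c$i)) \<in> borel_measurable lborel" if "t \<in> UNIV" for t by (rule Gmeas)
    show "\<bar>lam * Hd (aa c) (SS c) (t - c$i)\<bar> \<le> lam" if "t \<in> UNIV" "c \<in> cube Cbar" for t c by (rule Gbnd)
    show "AE c in lborel. c \<in> cube Cbar \<longrightarrow> continuous (at t within UNIV) (\<lambda>t. lam * Hd (aa c) (SS c) (t - c$i))" if "t \<in> UNIV" for t
      using kinks[of t]
    proof eventually_elim
      case (elim c)
      have "isCont (Hd (aa c) (SS c)) (t - c$i)"
        by (rule Hd_cont[OF aa0 SSle]) (use elim in auto)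
      then have "isCont (\<lambda>t. Hd (aa c) (SS c) (t - c$i)) t"
        by (rule isCont_o2[rotated]) (intro continuous_intros)
      then show ?case by (auto intro: continuous_intros)
    qed
  qed
  have Gmono: "G t1 \<le> G t2" if "t1 \<le> t2" for t1 t2
    unfolding G_def expect_def
  proof (rule integral_mono[OF Gint Gint])
    fix c :: "real^'n"
    have "Hd (aa c) (SS c) (t1 - c$i) \<le> Hd (aa c) (SS c) (t2 - c$i)"
      by (rule Hd_mono[OF aa0 SSle]) (use that in auto)
    then show "lam * Hd (aa c) (SS c) (t1 - c$i) * f c \<le> lam * Hd (aa c) (SS c) (t2 - c$i) * f c"
      using lam0 ff(2)[of c] by (intro mult_right_mono mult_left_mono) auto
  qed
  have gconv: "convex_on UNIV g"
    by (rule convex_on_realI[where f' = G]) (auto simp: deriv Gmono)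
  have gconvC: "convex_on {0..Cbar} g" by (rule convex_on_subset[OF gconv]) auto
  have partA: "\<exists>g'. continuous_on {0..Cbar} g' \<and>
      (\<forall>t\<in>{0..Cbar}. ((\<lambda>s. exp_penalty f lam (upd x i s) i) has_real_derivative g' t) (at t within {0..Cbar}))"
    using continuous_on_subset[OF Gcont] deriv unfolding g_def
    by (intro exI[of _ G]) (auto intro: has_field_derivative_at_within)
  have partC: "\<forall>t\<in>{0..Cbar}. continuous_on (cube Cbar) (\<lambda>y. exp_penalty f lam (upd y i t) i)"
  proof
    fix t :: real assume t: "t \<in> {0..Cbar}"
    show "continuous_on (cube Cbar) (\<lambda>y. exp_penalty f lam (upd y i t) i)"
      unfolding exp_penalty_def
    proof (rule expect_cont[OF F, where B = "lam * real CARD('n) * Cbar"])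
      show "(\<lambda>c. penalty lam (upd y i t) c i) \<in> borel_measurable lborel" if "y \<in> cube Cbar" for y by (rule pen_meas)
      show "\<bar>penalty lam (upd y i t) c i\<bar> \<le> lam * real CARD('n) * Cbar"
        if "y \<in> cube Cbar" "c \<in> cube Cbar" for y c
        unfolding penalty_Q by (rule Q_cube_bound[OF lam0 upd_cube[OF that(1) t] that(2)])
      show "AE c in lborel. c \<in> cube Cbar \<longrightarrow> continuous (at y within cube Cbar) (\<lambda>y. penalty lam (upd y i t) c i)" if "y \<in> cube Cbar" for y
      proof (rule AE_I2, rule impI)
        fix c :: "real^'n"
        have "continuous_on UNIV (\<lambda>y. penalty lam (upd y i t) c i)"
          by (rule pen_cont_y) (unfold upd_eq, intro continuous_intros)
        then show "continuous (at y within cube Cbar) (\<lambda>y. penalty lam (upd y i t) c i)"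
          by (simp add: continuous_on_eq_continuous_at continuous_at_imp_continuous_within)
      qed
    qed
  qed
  obtain u' where u': "\<forall>t\<in>{0<..}. (u has_real_derivative u' t) (at t)" using u_C1 by blast
  have ucont: "continuous_on {0<..} u"
    using u' by (intro continuous_at_imp_continuous_on) (auto intro: DERIV_isCont)
  define ut where "ut = (\<lambda>r. u (max r (d0 - Cbar)))"
  have utc: "continuous_on UNIV ut"
    unfolding ut_def by (rule continuous_on_compose2[OF ucont]) (use d0 in \<open>auto intro: continuous_intros\<close>)
  have ut_eq: "ut r = u r" if "r \<ge> d0 - Cbar" for r using that by (simp add: ut_def max_def)
  obtain Bu where Bu: "\<forall>r\<in>{d0 - Cbar..d0 + Cbar}. norm (ut r) \<le> Bu"
  proof -
    have "compact (ut ` {d0 - Cbar..d0 + Cbar})"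
      by (rule compact_continuous_image) (use utc in \<open>auto intro: continuous_on_subset\<close>)
    then show ?thesis using that compact_imp_bounded bounded_iff by (metis image_eqI)
  qed
  have arg_in: "d0 + c$i - y$i \<in> {d0 - Cbar..d0 + Cbar}" if "y \<in> cube Cbar" "c \<in> cube Cbar" for y c :: "real^'n"
  proof -
    have "0 \<le> y$i" "y$i \<le> Cbar" "0 \<le> c$i" "c$i \<le> Cbar" using that unfolding cube_def by auto
    then show ?thesis by auto
  qed
  have utcc: "continuous_on UNIV (\<lambda>c::real^'n. ut (d0 + c$i - s))" for s
    by (rule continuous_on_compose2[OF utc]) (auto intro!: continuous_at_imp_continuous_on continuous_intros)
  have ut_int: "integrable lborel (\<lambda>c. ut (d0 + c$i - s) * f c)" for s by (rule int_cont[OF F utcc])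
  have pay_eq: "payoff f lam u d0 rho y i = rho * y$i + expect f (\<lambda>c. ut (d0 + c$i - y$i) - penalty lam y c i)"
    if y: "y \<in> cube Cbar" for y
    unfolding payoff_def expect_def
  proof (intro arg_cong[where f = "\<lambda>z. rho * y$i + z"] Bochner_Integration.integral_cong refl)
    fix c :: "real^'n"
    show "(u (d0 + c $ i - y $ i) - penalty lam y c i) * f c = (ut (d0 + c $ i - y $ i) - penalty lam y c i) * f c"
    proof (cases "c \<in> cube Cbar")
      case True then show ?thesis using ut_eq arg_in[OF y True] by simp
    next
      case False then show ?thesis using ff(3) by simp
    qed
  qed
  have partE: "continuous_on (cube Cbar) (\<lambda>y. payoff f lam u d0 rho y i)"
  proof (rule continuous_on_eq[where f = "\<lambda>y. rho * y$i + expect f (\<lambda>c. ut (d0 + c$i - y$i) - penalty lam y c i)"])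
    show "rho * y$i + expect f (\<lambda>c. ut (d0 + c$i - y$i) - penalty lam y c i) = payoff f lam u d0 rho y i"
      if "y \<in> cube Cbar" for y using pay_eq[OF that] by simp
    show "continuous_on (cube Cbar) (\<lambda>y. rho * y$i + expect f (\<lambda>c. ut (d0 + c$i - y$i) - penalty lam y c i))"
    proof (rule continuous_on_add)
      show "continuous_on (cube Cbar) (\<lambda>y::real^'n. rho * y$i)"
        by (intro continuous_at_imp_continuous_on ballI continuous_intros)
      show "continuous_on (cube Cbar) (\<lambda>y. expect f (\<lambda>c. ut (d0 + c$i - y$i) - penalty lam y c i))"
      proof (rule expect_cont[OF F, where B = "Bu + lam * real CARD('n) * Cbar"])
        show "(\<lambda>c. ut (d0 + c$i - y$i) - penalty lam y c i) \<in> borel_measurable lborel" if "y \<in> cube Cbar" for y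
          by (rule cont_meas) (intro continuous_on_diff utcc pen_cont_c)
        show "\<bar>ut (d0 + c$i - y$i) - penalty lam y c i\<bar> \<le> Bu + lam * real CARD('n) * Cbar"
          if "y \<in> cube Cbar" "c \<in> cube Cbar" for y c
        proof -
          have "\<bar>ut (d0 + c$i - y$i)\<bar> \<le> Bu" using Bu arg_in[OF that] by auto
          moreover have "\<bar>penalty lam y c i\<bar> \<le> lam * real CARD('n) * Cbar"
            unfolding penalty_Q by (rule Q_cube_bound[OF lam0 that])
          ultimately show ?thesis by linarith
        qed
        show "AE c in lborel. c \<in> cube Cbar \<longrightarrow> continuous (at y within cube Cbar) (\<lambda>y. ut (d0 + c$i - y$i) - penalty lam y c i)" if "y \<in> cube Cbar" for y
        proof (rule AE_I2, rule impI)
          fix c :: "real^'n"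
          have "continuous_on UNIV (\<lambda>y. ut (d0 + c$i - y$i) - penalty lam y c i)"
          proof (intro continuous_on_diff)
            show "continuous_on UNIV (\<lambda>y::real^'n. ut (d0 + c$i - y$i))"
              by (rule continuous_on_compose2[OF utc]) (auto intro!: continuous_at_imp_continuous_on continuous_intros)
            show "continuous_on UNIV (\<lambda>y. penalty lam y c i)"
              using pen_cont_y[of "\<lambda>y. y" c] by (simp add: continuous_on_id)
          qed
          then show "continuous (at y within cube Cbar) (\<lambda>y. ut (d0 + c$i - y$i) - penalty lam y c i)"
            by (simp add: continuous_on_eq_continuous_at continuous_at_imp_continuous_within)
        qed
      qed
    qed
  qed
  define U where "U = (\<lambda>s. expect f (\<lambda>c. ut (d0 + c$i - s)))"
  have Pd: "payoff f lam u d0 rho (upd x i s) i = rho * s + U s - g s" if s: "s \<in> {0..Cbar}" for s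
  proof -
    have "expect f (\<lambda>c. ut (d0 + c$i - s) - penalty lam (upd x i s) c i)
        = integral\<^sup>L lborel (\<lambda>c. ut (d0 + c$i - s) * f c - penalty lam (upd x i s) c i * f c)"
      unfolding expect_def by (rule Bochner_Integration.integral_cong) (auto simp: algebra_simps)
    also have "\<dots> = U s - g s"
      unfolding U_def g_def exp_penalty_def expect_def by (rule Bochner_Integration.integral_diff[OF ut_int pen_int])
    finally show ?thesis using pay_eq[OF upd_cube[OF x s]] by (simp add: upd_nth)
  qed
  have Uconc: "a * U s1 + b * U s2 \<le> U (a * s1 + b * s2)"
    if "s1 \<in> {0..Cbar}" "s2 \<in> {0..Cbar}" "a \<ge> 0" "b \<ge> 0" "a + b = 1" for s1 s2 a b
  proof -
    have "a * U s1 + b * U s2 = integral\<^sup>L lborel (\<lambda>c. a * (ut (d0 + c$i - s1) * f c) + b * (ut (d0 + c$i - s2) * f c))"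
      unfolding U_def expect_def
      by (subst Bochner_Integration.integral_add) (auto intro: ut_int)
    also have "\<dots> \<le> U (a * s1 + b * s2)"
      unfolding U_def expect_def
    proof (rule integral_mono)
      show "integrable lborel (\<lambda>c. a * (ut (d0 + c$i - s1) * f c) + b * (ut (d0 + c$i - s2) * f c))"
        by (intro Bochner_Integration.integrable_add integrable_mult_right ut_int)
      show "integrable lborel (\<lambda>c. ut (d0 + c$i - (a * s1 + b * s2)) * f c)" by (rule ut_int)
      fix c :: "real^'n"
      show "a * (ut (d0 + c$i - s1) * f c) + b * (ut (d0 + c$i - s2) * f c) \<le> ut (d0 + c$i - (a * s1 + b * s2)) * f c"
      proof (cases "c \<in> cube Cbar")
        case False then show ?thesis using ff(3) by simp
      next
        case True
        have ci: "0 \<le> c$i" "c$i \<le> Cbar" using True unfolding cube_def by auto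
        define r1 where "r1 = d0 + c$i - s1"
        define r2 where "r2 = d0 + c$i - s2"
        have s12: "s1 \<le> Cbar" "s2 \<le> Cbar" using that(1,2) by auto
        have r: "r1 \<ge> d0 - Cbar" "r2 \<ge> d0 - Cbar" unfolding r1_def r2_def using s12 ci by linarith+
        have mix0: "a * r1 + b * r2 = (a + b) * (d0 + c$i) - (a * s1 + b * s2)"
          unfolding r1_def r2_def by (simp add: algebra_simps)
        have mix: "d0 + c$i - (a * s1 + b * s2) = a * r1 + b * r2"
          unfolding mix0 using that(5) by simp
        have mixge: "a * r1 + b * r2 \<ge> d0 - Cbar"
        proof -
          have "a * r1 + b * r2 \<ge> a * (d0 - Cbar) + b * (d0 - Cbar)"
            using r that by (intro add_mono mult_left_mono) auto
          then show ?thesis using that(5) by (simp add: distrib_right[symmetric])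
        qed
        have a1: "a = 1 - b" using that(5) by simp
        have rpos: "r1 \<in> {0<..}" "r2 \<in> {0<..}" using r d0 by auto
        have "(1 - b) * u r1 + b * u r2 \<le> u ((1 - b) *\<^sub>R r1 + b *\<^sub>R r2)"
          by (rule concave_onD[OF u_concave]) (use that(3,4,5) rpos in auto)
        then have "a * u r1 + b * u r2 \<le> u (a * r1 + b * r2)" unfolding a1 by simp
        then have "a * ut r1 + b * ut r2 \<le> ut (a * r1 + b * r2)"
          using ut_eq r mixge by simp
        then have "(a * ut r1 + b * ut r2) * f c \<le> ut (a * r1 + b * r2) * f c"
          using ff(2)[of c] by (rule mult_right_mono)
        then show ?thesis unfolding mix r1_def[symmetric] r2_def[symmetric] by (simp add: algebra_simps)
      qed
    qed
    finally show ?thesis .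
  qed
  have partD: "concave_on {0..Cbar} (\<lambda>s. payoff f lam u d0 rho (upd x i s) i)"
    unfolding concave_on_iff
  proof (intro conjI convex_real_interval ballI allI impI)
    fix s1 s2 a b :: real
    assume s1: "s1 \<in> {0..Cbar}" and s2: "s2 \<in> {0..Cbar}" and ab: "0 \<le> a" "0 \<le> b" "a + b = 1"
    have sm: "a * s1 + b * s2 \<in> {0..Cbar}"
      using convex_real_interval(5)[of 0 Cbar] s1 s2 ab unfolding convex_def by auto
    have gc: "g (a * s1 + b * s2) \<le> a * g s1 + b * g s2"
      using gconvC s1 s2 ab unfolding convex_on_def by auto
    have uc: "a * U s1 + b * U s2 \<le> U (a * s1 + b * s2)" by (rule Uconc[OF s1 s2 ab])
    have rr: "rho * (a * s1 + b * s2) = a * (rho * s1) + b * (rho * s2)" by (simp add: algebra_simps)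
    show "a * payoff f lam u d0 rho (upd x i s1) i + b * payoff f lam u d0 rho (upd x i s2) i
        \<le> payoff f lam u d0 rho (upd x i (a *\<^sub>R s1 + b *\<^sub>R s2)) i"
    proof -
      have l: "a * payoff f lam u d0 rho (upd x i s1) i + b * payoff f lam u d0 rho (upd x i s2) i
        = a * (rho * s1) + b * (rho * s2) + (a * U s1 + b * U s2) - (a * g s1 + b * g s2)"
        by (simp add: Pd[OF s1] Pd[OF s2] algebra_simps)
      have r: "payoff f lam u d0 rho (upd x i (a *\<^sub>R s1 + b *\<^sub>R s2)) i
        = rho * (a * s1 + b * s2) + U (a * s1 + b * s2) - g (a * s1 + b * s2)"
        using Pd[OF sm] by simp
      show ?thesis unfolding l r using gc uc rr by linarith
    qed
  qed
  show "(\<exists>g'. continuous_on {0..Cbar} g' \<and>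
              (\<forall>t\<in>{0..Cbar}. ((\<lambda>s. exp_penalty f lam (upd x i s) i)
                                    has_real_derivative g' t) (at t within {0..Cbar})))
         \<and> convex_on {0..Cbar} (\<lambda>s. exp_penalty f lam (upd x i s) i)
         \<and> (\<forall>t\<in>{0..Cbar}. continuous_on (cube Cbar) (\<lambda>y. exp_penalty f lam (upd y i t) i))
         \<and> concave_on {0..Cbar} (\<lambda>s. payoff f lam u d0 rho (upd x i s) i)
         \<and> continuous_on (cube Cbar) (\<lambda>y. payoff f lam u d0 rho y i)"
  proof -
    have gc': "convex_on {0..Cbar} (\<lambda>s. exp_penalty f lam (upd x i s) i)" using gconvC unfolding g_def .
    show ?thesis by (rule conjI[OF partA conjI[OF gc' conjI[OF partC conjI[OF partD partE]]]])
  qed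
qed


end
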